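(* If $s,t\in\Sigma^n$ and $d:\Sigma^n\to\Sigma$ is a depth assignment, then \[D\left(P\left(H(s)+e_{d_s}\right)-P\left(H(t)+e_{d_t}\right)\right)\le n+1.\]
   Context: Let $k\ge 1$ be an integer, $\Sigma=\{0,1,\dots,k-1\}$, $n\ge 1$. A depth assignment is any function $d:\Sigma^n\to\Sigma$, written $s\mapsto d_s$. The histogram $H(s):\Sigma\to\mathbb{Z}$ of a string $s$ gives the number of occurrences of each symbol in $s$; $e_b$ is the indicator function of $b\in\Sigma$. For $H:\Sigma\to\mathbb{Z}$, the partial sum is $P(H)(i)=\sum_{j=0}^{i}H(j)$ and the difference is $D(H)=\max_{i,j\in\Sigma}(H(i)-H(j))$. *)

theory Defs
  imports Main
begin

text \<open>Alphabet Sigma = {0..<k}; strings in Sigma^n are lists of length n with entries < k.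
Functions Sigma -> Z are represented as nat => int, only values on {0..<k} matter.\<close>

definition strings :: "nat \<Rightarrow> nat \<Rightarrow> nat list set" where
  "strings k n = {s. length s = n \<and> (\<forall>x\<in>set s. x < k)}"

definition hist :: "nat list \<Rightarrow> nat \<Rightarrow> int" where
  "hist s a = int (count_list s a)"

definition indic :: "nat \<Rightarrow> nat \<Rightarrow> int" where
  "indic b a = (if a = b then 1 else 0)"

definition psum :: "(nat \<Rightarrow> int) \<Rightarrow> nat \<Rightarrow> int" where
  "psum H i = (\<Sum>j\<le>i. H j)"

definition diff :: "nat \<Rightarrow> (nat \<Rightarrow> int) \<Rightarrow> int" where
  "diff k H = Max {H i - H j | i j. i < k \<and> j < k}"

end

theory Submission
  imports Defs
begin

lemma count_sum_le: "finite A \<Longrightarrow> (\<Sum>a\<in>A. int (count_list s a)) \<le> int (length s)"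
proof (induction s)
  case Nil then show ?case by simp
next
  case (Cons x xs)
  have "(\<Sum>a\<in>A. int (count_list (x#xs) a)) = (\<Sum>a\<in>A. (if a = x then 1 else 0)) + (\<Sum>a\<in>A. int (count_list xs a))"
    by (simp add: sum.distrib[symmetric]; rule sum.cong; auto)
  also have "(\<Sum>a\<in>A. (if a = x then 1 else 0::int)) \<le> 1"
    using Cons.prems by (simp add: sum.If_cases)
  finally show ?case using Cons by simp
qed

lemma indic_sum_le: "finite A \<Longrightarrow> (\<Sum>a\<in>A. indic b a) \<le> 1"
  by (simp add: indic_def sum.If_cases)

lemma psum_bound:
  assumes "\<And>a. 0 \<le> H a" "\<And>A. finite A \<Longrightarrow> sum H A \<le> M" "j \<le> (i::nat)"
  shows "0 \<le> psum H i - psum H j \<and> psum H i - psum H j \<le> M"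
proof -
  have "{..i} = {..j} \<union> {j<..i}" using assms(3) by auto
  then have "psum H i = psum H j + sum H {j<..i}"
    unfolding psum_def by (simp add: sum.union_disjoint ivl_disj_int)
  moreover have "0 \<le> sum H {j<..i}" using assms(1) by (simp add: sum_nonneg)
  moreover have "sum H {j<..i} \<le> M" using assms(2) by simp
  ultimately show ?thesis by simp
qed

lemma hist_bound:
  fixes s :: "nat list" and b :: nat
  assumes "length s = n" "j \<le> i"
  defines "H \<equiv> (\<lambda>a. hist s a + indic b a)"
  shows "0 \<le> psum H i - psum H j \<and> psum H i - psum H j \<le> int n + 1"
proof (rule psum_bound)
  show "0 \<le> H a" for a by (simp add: H_def hist_def indic_def)
  show "sum H A \<le> int n + 1" if "finite A" for A
    using count_sum_le[OF that, of s] indic_sum_le[OF that, of b] assms(1)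
    by (simp add: H_def hist_def sum.distrib)
  show "j \<le> i" by fact
qed

theorem lemma7:
  fixes k n :: nat and d :: "nat list \<Rightarrow> nat" and s t :: "nat list"
  assumes "k \<ge> 1" and "n \<ge> 1"
    and "\<forall>u\<in>strings k n. d u < k"
    and "s \<in> strings k n" and "t \<in> strings k n"
  shows "diff k (\<lambda>i. psum (\<lambda>a. hist s a + indic (d s) a) i
                      - psum (\<lambda>a. hist t a + indic (d t) a) i) \<le> int n + 1"
proof -
  let ?F = "\<lambda>i. psum (\<lambda>a. hist s a + indic (d s) a) i - psum (\<lambda>a. hist t a + indic (d t) a) i"
  have ls: "length s = n" and lt: "length t = n" using assms(4,5) by (auto simp: strings_def)
  let ?S = "{?F i - ?F j | i j. i < k \<and> j < k}"
  have fin: "finite ?S"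
  proof -
    have "?S = (\<lambda>(i,j). ?F i - ?F j) ` ({..<k} \<times> {..<k})" by auto
    then show ?thesis by simp
  qed
  have ne: "?S \<noteq> {}" using assms(1) by (auto intro!: exI[of _ 0])
  have bnd: "x \<le> int n + 1" if "x \<in> ?S" for x
  proof -
    obtain i j where x: "x = ?F i - ?F j" using \<open>x \<in> ?S\<close> by blast
    show ?thesis
    proof (cases "j \<le> i")
      case True
      show ?thesis using hist_bound[OF ls True, of "d s"] hist_bound[OF lt True, of "d t"] x by linarith
    next
      case False
      then have "i \<le> j" by simp
      show ?thesis using hist_bound[OF ls \<open>i \<le> j\<close>, of "d s"] hist_bound[OF lt \<open>i \<le> j\<close>, of "d t"] x by linarith
    qed
  qed
  show ?thesis unfolding diff_def using fin ne bnd by (simp add: Max_le_iff)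
qed

end
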